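(* Let $\theta\mapsto K_m(\theta)\in\mathbb{C}^{D\times D}$, $m=0,\dots,d-1$, be differentiable with $\sum_mK_m^\dagger K_m=\mathbb{1}_D$, and fix $\theta_0$. Suppose the Hamiltonian-in-Kraus-span (HKS) condition holds at $\theta_0$: $H_s:=i\sum_mK_m^\dagger\partial_\theta K_m\in\mathrm{span}\{K_i^\dagger K_j:0\le i,j<d\}$ (all evaluated at $\theta_0$). Then there is a Hermitian $h\in\mathbb{C}^{d\times d}$ such that, writing $u_\theta=e^{i\theta h}$ and defining the isometry $W_\theta=(\mathbb{1}_D\otimes u_\theta^\dagger)V_\theta$, i.e. $W_\theta=\sum_m W_m(\theta)\otimes|m\rangle$ with $V_\theta=\sum_mK_m(\theta)\otimes|m\rangle$, one has $V_\theta=(\mathbb{1}_D\otimes u_\theta)W_\theta$ for all $\theta$ and $$\sum_m W_m(\theta_0)^\dagger\,\partial_\theta W_m(\theta_0)=0.$$ Consequently, if $\rho_{ss}$ is a fixed point of the channel $\mathcal{E}(X)=\sum_mK_mXK_m^\dagger$ at $\theta_0$ (which is also the channel of $W$), the quantities $\gamma^W=\sum_m\mathrm{Tr}(W_m\rho_{ss}\dot W_m^\dagger)$ and $\beta^W_\tau=\mathrm{Tr}[\sum_m\dot W_m\mathcal{E}^\tau(\sum_nW_n\rho_{ss}\dot W_n^\dagger)W_m^\dagger]$ vanish for all $\tau\ge0$, and the quantum Fisher information at $\theta_0$ of the $T$-site state $|\Phi^W_T\rangle$ generated by $W$ equals $4T\alpha^W$ with $\alpha^W=\sum_m\mathrm{Tr}(\dot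 W_m\rho_{ss}\dot W_m^\dagger)$.
   Context: Dots denote $\partial_\theta$ at $\theta_0$. For a tensor $X=\sum_mX_m\otimes|m\rangle$ the $T$-site state is $|\Phi^X_T(\theta)\rangle=\sum_{\mathbf{m}}(\mathbb{1}_A\otimes X_{m_T}(\theta)\cdots X_{m_1}(\theta))|\xi\rangle\otimes|m_1\cdots m_T\rangle$, where $|\xi\rangle\in\mathbb{C}^D_A\otimes\mathbb{C}^D_S$ is a fixed $\theta$-independent purification of $\rho_{ss}$ (the translation-invariant MPS with boundary vectors identity and $\rho_{ss}$). Pure-state QFI is $4(\langle\dot\psi|\dot\psi\rangle-|\langle\dot\psi|\psi\rangle|^2)$. *)

theory Defs
  imports "HOL-Analysis.Analysis"
begin

definition cscale :: "complex \<Rightarrow> complex^'n^'m \<Rightarrow> complex^'n^'m" where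
  "cscale c A = (\<chi> i j. c * A $ i $ j)"

definition cadj :: "complex^'n^'m \<Rightarrow> complex^'m^'n" where
  "cadj A = (\<chi> i j. cnj (A $ j $ i))"

fun mpow :: "complex^'n^'n \<Rightarrow> nat \<Rightarrow> complex^'n^'n" where
  "mpow A 0 = mat 1"
| "mpow A (Suc n) = A ** mpow A n"

definition mexp :: "complex^'n^'n \<Rightarrow> complex^'n^'n" where
  "mexp A = (\<Sum>n. cscale (1 / of_nat (fact n)) (mpow A n))"

definition channel :: "('d \<Rightarrow> complex^'D^'D) \<Rightarrow> complex^'D^'D \<Rightarrow> complex^'D^'D" where
  "channel K X = (\<Sum>m\<in>UNIV. K m ** X ** cadj (K m))"

text \<open>Ordered product X_{m_T} ... X_{m_1} for the list [m_1, ..., m_T].\<close>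
fun lprod :: "('d \<Rightarrow> complex^'D^'D) \<Rightarrow> 'd list \<Rightarrow> complex^'D^'D" where
  "lprod X [] = mat 1"
| "lprod X (m # ms) = lprod X ms ** X m"

text \<open>Components of the T-site MPS state |Phi^X_T(theta)>, indexed by (a, s, [m_1,...,m_T]):
  sum_{s'} (X_{m_T}(theta) ... X_{m_1}(theta))_{s s'} xi_{a s'}.\<close>
definition mps_state :: "('d \<Rightarrow> real \<Rightarrow> complex^'D^'D) \<Rightarrow> ('D \<Rightarrow> 'D \<Rightarrow> complex)
    \<Rightarrow> real \<Rightarrow> 'D \<times> 'D \<times> 'd list \<Rightarrow> complex" where
  "mps_state X xi \<theta> = (\<lambda>(a, s, ms). \<Sum>s'\<in>UNIV. lprod (\<lambda>m. X m \<theta>) ms $ s $ s' * xi a s')"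

definition sites :: "nat \<Rightarrow> ('D::finite \<times> 'D \<times> 'd::finite list) set" where
  "sites T = {(a, s, ms). length ms = T}"

definition cinner :: "'i set \<Rightarrow> ('i \<Rightarrow> complex) \<Rightarrow> ('i \<Rightarrow> complex) \<Rightarrow> complex" where
  "cinner I f g = (\<Sum>x\<in>I. cnj (f x) * g x)"

definition pure_qfi :: "'i set \<Rightarrow> (real \<Rightarrow> 'i \<Rightarrow> complex) \<Rightarrow> real \<Rightarrow> complex" where
  "pure_qfi I \<psi> \<theta>0 =
     (let d\<psi> = (\<lambda>x. vector_derivative (\<lambda>\<theta>. \<psi> \<theta> x) (at \<theta>0))
      in 4 * (cinner I d\<psi> d\<psi> - complex_of_real ((cmod (cinner I d\<psi> (\<psi> \<theta>0)))\<^sup>2)))"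

end

theory Submission
  imports Defs
begin

typedef ('n::finite) cm = "UNIV :: (complex^'n^'n) set" by auto
setup_lifting type_definition_cm

lemma norm_axis_gen: "norm (axis i (x::'a::real_normed_vector)) = norm x"
proof -
  have "norm (axis i x) = L2_set (\<lambda>j. norm (axis i x $ j)) UNIV" by (simp add: norm_vec_def)
  also have "\<dots> = L2_set (\<lambda>j. if j = i then norm x else 0) UNIV"
    by (rule L2_set_cong) (auto simp: axis_def)
  also have "\<dots> = norm x" by (simp add: L2_set_def if_distrib[of "\<lambda>x. x^2"] cong: if_cong)
  finally show ?thesis .
qed

lemma mv_perfect: "\<exists>x::complex^'n. x \<noteq> 0"
  by (rule exI[of _ "axis undefined 1"]) (simp add: axis_eq_axis axis_def vec_eq_iff)

lemma entry_le_onorm: "norm (A $ i $ j) \<le> onorm ((*v) (A::complex^'n^'m))"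
proof -
  have "A $ i $ j = (A *v axis j 1) $ i"
    by (simp add: matrix_vector_mult_def axis_def if_distrib cong: if_cong)
  also have "norm \<dots> \<le> norm (A *v axis j 1)" by (rule Finite_Cartesian_Product.norm_nth_le)
  also have "\<dots> \<le> onorm ((*v) A) * norm (axis j (1::complex))" by (rule onorm) simp
  finally show ?thesis by (simp add: norm_axis_gen)
qed

lemma onorm_le_entries: "onorm ((*v) (A::complex^'n^'m)) \<le> (\<Sum>i\<in>UNIV. \<Sum>j\<in>UNIV. norm (A $ i $ j))"
proof (rule onorm_bound)
  show "0 \<le> (\<Sum>i\<in>UNIV. \<Sum>j\<in>UNIV. norm (A $ i $ j))" by (simp add: sum_nonneg)
  fix v :: "complex^'n"
  have "norm (A *v v) \<le> (\<Sum>i\<in>UNIV. norm ((A *v v) $ i))"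
    unfolding norm_vec_def by (rule L2_set_le_sum) simp
  also have "\<dots> \<le> (\<Sum>i\<in>UNIV. \<Sum>j\<in>UNIV. norm (A $ i $ j) * norm v)"
  proof (rule sum_mono)
    fix i
    have "norm ((A *v v) $ i) \<le> (\<Sum>j\<in>UNIV. norm (A $ i $ j * v $ j))"
      unfolding matrix_vector_mult_def by (simp add: norm_sum)
    also have "\<dots> \<le> (\<Sum>j\<in>UNIV. norm (A $ i $ j) * norm v)"
      by (rule sum_mono) (simp add: norm_mult mult_left_mono Finite_Cartesian_Product.norm_nth_le)
    finally show "norm ((A *v v) $ i) \<le> (\<Sum>j\<in>UNIV. norm (A $ i $ j) * norm v)" .
  qed
  finally show "norm (A *v v) \<le> (\<Sum>i\<in>UNIV. \<Sum>j\<in>UNIV. norm (A $ i $ j)) * norm v"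
    by (simp add: sum_distrib_right)
qed

lemma mat_onorm_eq0: "onorm ((*v) (A::complex^'n^'m)) = 0 \<longleftrightarrow> A = 0"
proof
  assume "onorm ((*v) A) = 0"
  then have "\<forall>i j. A $ i $ j = 0" using entry_le_onorm[of A] by (metis norm_le_zero_iff)
  then show "A = 0" by (simp add: vec_eq_iff)
next
  assume "A = 0"
  then have "(*v) A = (\<lambda>x. 0)" by (auto simp: fun_eq_iff)
  then show "onorm ((*v) A) = 0" by (simp add: onorm_zero)
qed

instantiation cm :: (finite) real_normed_algebra_1
begin
lift_definition zero_cm :: "'a cm" is 0 .
lift_definition one_cm :: "'a cm" is "mat 1" .
lift_definition plus_cm :: "'a cm \<Rightarrow> 'a cm \<Rightarrow> 'a cm" is "(+)" .
lift_definition minus_cm :: "'a cm \<Rightarrow> 'a cm \<Rightarrow> 'a cm" is "(-)" .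
lift_definition uminus_cm :: "'a cm \<Rightarrow> 'a cm" is "uminus" .
lift_definition times_cm :: "'a cm \<Rightarrow> 'a cm \<Rightarrow> 'a cm" is "(**)" .
lift_definition scaleR_cm :: "real \<Rightarrow> 'a cm \<Rightarrow> 'a cm" is "scaleR" .
lift_definition norm_cm :: "'a cm \<Rightarrow> real" is "\<lambda>A. onorm ((*v) A)" .
definition dist_cm :: "'a cm \<Rightarrow> 'a cm \<Rightarrow> real" where "dist_cm a b = norm (a - b)"
definition sgn_cm :: "'a cm \<Rightarrow> 'a cm" where "sgn_cm x = scaleR (inverse (norm x)) x"
definition uniformity_cm :: "('a cm \<times> 'a cm) filter" where
  "uniformity_cm = (INF e\<in>{0 <..}. principal {(x, y). dist x y < e})"
definition open_cm :: "'a cm set \<Rightarrow> bool" where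
  "open_cm S = (\<forall>x\<in>S. \<forall>\<^sub>F (x', y) in uniformity. x' = x \<longrightarrow> y \<in> S)"
instance
proof
  fix a b c :: "'a cm" and r s :: real
  show "a + b + c = a + (b + c)" by transfer (simp add: algebra_simps)
  show "a + b = b + a" by transfer (simp add: algebra_simps)
  show "0 + a = a" by transfer simp
  show "- a + a = 0" by transfer simp
  show "a - b = a + - b" by transfer simp
  show "r *\<^sub>R (a + b) = r *\<^sub>R a + r *\<^sub>R b" by transfer (simp add: scaleR_right_distrib)
  show "(r + s) *\<^sub>R a = r *\<^sub>R a + s *\<^sub>R a" by transfer (simp add: scaleR_left_distrib)
  show "r *\<^sub>R s *\<^sub>R a = (r * s) *\<^sub>R a" by transfer simp
  show "1 *\<^sub>R a = a" by transfer simp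
  show "a * b * c = a * (b * c)" by transfer (simp add: matrix_mul_assoc)
  show "(a + b) * c = a * c + b * c" by transfer (simp add: vec_eq_iff matrix_matrix_mult_def sum.distrib distrib_right)
  show "a * (b + c) = a * b + a * c" by transfer (simp add: matrix_add_ldistrib)
  show "r *\<^sub>R a * b = r *\<^sub>R (a * b)"
    by transfer (simp add: vec_eq_iff matrix_matrix_mult_def scaleR_sum_right)
  show "a * r *\<^sub>R b = r *\<^sub>R (a * b)"
    by transfer (simp add: vec_eq_iff matrix_matrix_mult_def scaleR_sum_right)
  show "1 * a = a" by transfer simp
  show "a * 1 = a" by transfer simp
  show "(0::'a cm) \<noteq> 1"
    by transfer (simp add: vec_eq_iff mat_def)
  show "dist a b = norm (a - b)" by (simp add: dist_cm_def)
  show "sgn a = inverse (norm a) *\<^sub>R a" by (simp add: sgn_cm_def)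
  show "(uniformity :: ('a cm \<times> 'a cm) filter) = (INF e\<in>{0 <..}. principal {(x, y). dist x y < e})"
    by (simp add: uniformity_cm_def)
  fix U :: "'a cm set"
  show "open U = (\<forall>x\<in>U. \<forall>\<^sub>F (x', y) in uniformity. x' = x \<longrightarrow> y \<in> U)"
    by (simp add: open_cm_def)
  show "norm a = 0 \<longleftrightarrow> a = 0" by transfer (rule mat_onorm_eq0)
  show "norm (a + b) \<le> norm a + norm b"
  proof transfer
    fix A B :: "complex^'a^'a"
    have "(*v) (A + B) = (\<lambda>v. A *v v + B *v v)"
      by (auto simp: fun_eq_iff matrix_vector_mult_add_rdistrib)
    then show "onorm ((*v) (A + B)) \<le> onorm ((*v) A) + onorm ((*v) B)"
      by (simp add: onorm_triangle)
  qed
  show "norm (r *\<^sub>R a) = \<bar>r\<bar> * norm a"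
  proof transfer
    fix r and A :: "complex^'a^'a"
    have "(*v) (r *\<^sub>R A) = (\<lambda>v. r *\<^sub>R (A *v v))"
      by (auto simp: fun_eq_iff vec_eq_iff matrix_vector_mult_def scaleR_sum_right)
    then show "onorm ((*v) (r *\<^sub>R A)) = \<bar>r\<bar> * onorm ((*v) A)"
      by (simp add: onorm_scaleR)
  qed
  show "norm (a * b) \<le> norm a * norm b"
  proof transfer
    fix A B :: "complex^'a^'a"
    have "(*v) (A ** B) = (*v) A \<circ> (*v) B"
      by (auto simp: fun_eq_iff matrix_vector_mul_assoc)
    then show "onorm ((*v) (A ** B)) \<le> onorm ((*v) A) * onorm ((*v) B)"
      by (simp add: onorm_compose)
  qed
  show "norm (1::'a cm) = 1"
  proof transfer
    have "(*v) (mat 1 :: complex^'a^'a) = (\<lambda>v. v)"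
      by (auto simp: fun_eq_iff)
    then show "onorm ((*v) (mat 1 :: complex^'a^'a)) = 1"
      by (simp add: onorm_id)
  qed
qed
end

lemma mat_norm_le_entries: "norm (A::complex^'n^'m) \<le> (\<Sum>i\<in>UNIV. \<Sum>j\<in>UNIV. norm (A $ i $ j))"
proof -
  have "norm A \<le> (\<Sum>i\<in>UNIV. norm (A $ i))"
    unfolding norm_vec_def by (rule L2_set_le_sum) simp
  also have "\<dots> \<le> (\<Sum>i\<in>UNIV. \<Sum>j\<in>UNIV. norm (A $ i $ j))"
    by (rule sum_mono) (unfold norm_vec_def, rule L2_set_le_sum, simp)
  finally show ?thesis .
qed

lemma mat_entry_le: "norm ((A::complex^'n^'m) $ i $ j) \<le> norm A"
  by (meson Finite_Cartesian_Product.norm_nth_le order_trans)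

lemma norm_cm_entry: "norm (Rep_cm x $ i $ j) \<le> norm x"
  by transfer (rule entry_le_onorm)

lemma norm_cm_le: "norm x \<le> (\<Sum>i\<in>UNIV. \<Sum>j\<in>UNIV. norm (Rep_cm x $ i $ j))"
  by transfer (rule onorm_le_entries)

lemma Rep_cm_diff: "Rep_cm (x - y) = Rep_cm x - Rep_cm y" by transfer simp
lemma Rep_cm_add: "Rep_cm (x + y) = Rep_cm x + Rep_cm y" by transfer simp
lemma Rep_cm_scaleR: "Rep_cm (r *\<^sub>R x) = r *\<^sub>R Rep_cm x" by transfer simp
lemma Rep_cm_mult: "Rep_cm (x * y) = Rep_cm x ** Rep_cm y" by transfer simp
lemma Rep_cm_one: "Rep_cm 1 = mat 1" by transfer simp
lemma Rep_cm_power: "Rep_cm (x ^ n) = mpow (Rep_cm x) n"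
  by (induction n) (simp_all add: Rep_cm_one Rep_cm_mult)

instance cm :: (finite) banach
proof
  fix X :: "nat \<Rightarrow> 'a cm"
  assume C: "Cauchy X"
  have "Cauchy (\<lambda>n. Rep_cm (X n) $ i $ j)" for i j
  proof (rule CauchyI)
    fix e :: real assume "0 < e"
    with C obtain M where M: "\<forall>m\<ge>M. \<forall>n\<ge>M. norm (X m - X n) < e"
      unfolding Cauchy_iff by blast
    show "\<exists>M. \<forall>m\<ge>M. \<forall>n\<ge>M. norm (Rep_cm (X m) $ i $ j - Rep_cm (X n) $ i $ j) < e"
    proof (intro exI allI impI)
      fix m n assume "M \<le> m" "M \<le> n"
      have "norm (Rep_cm (X m) $ i $ j - Rep_cm (X n) $ i $ j) = norm (Rep_cm (X m - X n) $ i $ j)"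
        by (simp add: Rep_cm_diff)
      also have "\<dots> \<le> norm (X m - X n)" by (rule norm_cm_entry)
      finally show "norm (Rep_cm (X m) $ i $ j - Rep_cm (X n) $ i $ j) < e"
        using M \<open>M \<le> m\<close> \<open>M \<le> n\<close> by fastforce
    qed
  qed
  then have "\<forall>i j. \<exists>l. (\<lambda>n. Rep_cm (X n) $ i $ j) \<longlonglongrightarrow> l"
    by (simp add: Cauchy_convergent_iff convergent_def)
  then obtain l where l: "\<And>i j. (\<lambda>n. Rep_cm (X n) $ i $ j) \<longlonglongrightarrow> l i j" by metis
  define L where "L = Abs_cm (\<chi> i j. l i j)"
  have RL: "Rep_cm L $ i $ j = l i j" for i j by (simp add: L_def Abs_cm_inverse)
  have "(\<lambda>n. X n - L) \<longlonglongrightarrow> 0"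
  proof (rule Lim_null_comparison)
    show "\<forall>\<^sub>F n in sequentially. norm (X n - L) \<le> (\<Sum>i\<in>UNIV. \<Sum>j\<in>UNIV. norm (Rep_cm (X n) $ i $ j - l i j))"
      using norm_cm_le[of "X _ - L"] by (simp add: Rep_cm_diff RL)
    have "(\<lambda>n. norm (Rep_cm (X n) $ i $ j - l i j)) \<longlonglongrightarrow> 0" for i j
      using l[of i j] by (intro tendsto_norm_zero LIM_zero)
    then show "(\<lambda>n. (\<Sum>i\<in>UNIV. \<Sum>j\<in>UNIV. norm (Rep_cm (X n) $ i $ j - l i j))) \<longlonglongrightarrow> 0" by (intro tendsto_null_sum)
  qed
  then have "X \<longlonglongrightarrow> L" by (simp add: LIM_zero_iff)
  then show "convergent X" by (auto simp: convergent_def)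
qed

lemma bounded_linear_Rep_cm: "bounded_linear (Rep_cm :: 'n::finite cm \<Rightarrow> _)"
proof (rule bounded_linear_intro[where K="of_nat (CARD('n) * CARD('n))"])
  fix x y :: "'n cm" and r
  show "Rep_cm (x + y) = Rep_cm x + Rep_cm y" by (rule Rep_cm_add)
  show "Rep_cm (r *\<^sub>R x) = r *\<^sub>R Rep_cm x" by (rule Rep_cm_scaleR)
  have "norm (Rep_cm x) \<le> (\<Sum>i\<in>(UNIV::'n set). \<Sum>j\<in>(UNIV::'n set). norm x)"
  proof -
    have "(\<Sum>i\<in>UNIV. \<Sum>j\<in>UNIV. norm (Rep_cm x $ i $ j)) \<le> (\<Sum>i\<in>(UNIV::'n set). \<Sum>j\<in>(UNIV::'n set). norm x)"
      by (intro sum_mono norm_cm_entry)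
    then show ?thesis using mat_norm_le_entries[of "Rep_cm x"] by linarith
  qed
  then show "norm (Rep_cm x) \<le> norm x * of_nat (CARD('n) * CARD('n))" by (simp add: ac_simps)
qed

lemma cscale_real: "cscale (complex_of_real r) A = r *\<^sub>R A"
  apply (simp add: cscale_def vec_eq_iff vector_scaleR_component)
  apply (simp add: scaleR_conv_of_real)
  done

lemma mexp_Rep: "mexp A = Rep_cm (exp (Abs_cm A))"
proof -
  have "(\<lambda>n. Rep_cm (Abs_cm A ^ n /\<^sub>R fact n)) sums Rep_cm (exp (Abs_cm A))"
    by (rule bounded_linear.sums[OF bounded_linear_Rep_cm exp_converges])
  moreover have "Rep_cm (Abs_cm A ^ n /\<^sub>R fact n) = cscale (1 / of_nat (fact n)) (mpow A n)" for n
  proof -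
    have "cscale (1 / of_nat (fact n)) (mpow A n) = inverse (fact n) *\<^sub>R mpow A n"
      using cscale_real[of "inverse (fact n)" "mpow A n"] by (simp add: divide_inverse)
    then show ?thesis
      by (simp add: Rep_cm_scaleR Rep_cm_power Abs_cm_inverse)
  qed
  ultimately show ?thesis unfolding mexp_def by (simp add: sums_iff)
qed

lemma mexp_inv: "mexp A ** mexp (- A) = mat 1"
proof -
  have "Abs_cm (- A) = - Abs_cm A" by (metis Abs_cm_inverse uminus_cm.rep_eq Rep_cm_inverse UNIV_I)
  then show ?thesis
    by (simp add: mexp_Rep Rep_cm_mult[symmetric] exp_minus_inverse Rep_cm_one)
qed

lemma mexp_comm: "mexp A ** A = A ** mexp A"
proof -
  have "Rep_cm (exp (Abs_cm A) * Abs_cm A) = Rep_cm (Abs_cm A * exp (Abs_cm A))"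
    by (simp add: exp_times_arg_commute)
  then show ?thesis by (simp add: Rep_cm_mult mexp_Rep Abs_cm_inverse)
qed

lemma mexp_deriv:
  "((\<lambda>t. mexp (cscale (complex_of_real t) B)) has_vector_derivative (mexp (cscale (complex_of_real t) B) ** B)) (at t)"
proof -
  have e: "mexp (cscale (complex_of_real t) B) = Rep_cm (exp (t *\<^sub>R Abs_cm B))" for t
  proof -
    have "Abs_cm (t *\<^sub>R B) = t *\<^sub>R Abs_cm B"
      by (metis Abs_cm_inverse Rep_cm_inverse Rep_cm_scaleR UNIV_I)
    then show ?thesis by (simp add: mexp_Rep cscale_real)
  qed
  have "((\<lambda>t. Rep_cm (exp (t *\<^sub>R Abs_cm B))) has_vector_derivative Rep_cm (exp (t *\<^sub>R Abs_cm B) * Abs_cm B)) (at t)"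
    by (rule bounded_linear.has_vector_derivative[OF bounded_linear_Rep_cm exp_scaleR_has_vector_derivative_right])
  then show ?thesis by (simp add: e Rep_cm_mult Abs_cm_inverse)
qed

lemma cscale_add_left: "cscale (a + b) A = cscale a A + cscale b A"
  by (simp add: cscale_def vec_eq_iff distrib_right)
lemma cscale_add_right: "cscale a (A + B) = cscale a A + cscale a B"
  by (simp add: cscale_def vec_eq_iff distrib_left)
lemma cscale_sum_left: "cscale (\<Sum>i\<in>S. f i) A = (\<Sum>i\<in>S. cscale (f i) A)"
  by (induction S rule: infinite_finite_induct)
     (auto simp: cscale_add_left, simp_all add: cscale_def vec_eq_iff)
lemma cscale_sum_right: "cscale a (\<Sum>i\<in>S. F i) = (\<Sum>i\<in>S. cscale a (F i))"
  by (induction S rule: infinite_finite_induct)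
     (auto simp: cscale_add_right, simp_all add: cscale_def vec_eq_iff)
lemma cscale_cscale: "cscale a (cscale b A) = cscale (a * b) A"
  by (simp add: cscale_def vec_eq_iff mult.assoc)
lemma cscale_one[simp]: "cscale 1 A = A"
  by (simp add: cscale_def vec_eq_iff)
lemma cscale_zero[simp]: "cscale 0 A = 0"
  by (simp add: cscale_def vec_eq_iff)
lemma cscale_zero_right[simp]: "cscale a 0 = 0"
  by (simp add: cscale_def vec_eq_iff)
lemma cscale_minus_left: "cscale (- a) A = - cscale a A"
  by (simp add: cscale_def vec_eq_iff)

lemma mm_cscale_left: "cscale c A ** B = cscale c (A ** B)"
  by (simp add: cscale_def vec_eq_iff matrix_matrix_mult_def sum_distrib_left mult.assoc)
lemma mm_cscale_right: "A ** cscale c B = cscale c (A ** B)"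
  by (simp add: cscale_def vec_eq_iff matrix_matrix_mult_def sum_distrib_left ac_simps)
lemma mm_add_left: "(A + B) ** C = A ** C + B ** (C::'a::semiring_1^_^_)"
  by (simp add: vec_eq_iff matrix_matrix_mult_def sum.distrib distrib_right)
lemma mm_sum_left: "(\<Sum>i\<in>S. F i) ** (B::'a::semiring_1^_^_) = (\<Sum>i\<in>S. F i ** B)"
  by (induction S rule: infinite_finite_induct) (simp_all add: mm_add_left)
lemma mm_sum_right: "(B::'a::semiring_1^_^_) ** (\<Sum>i\<in>S. F i) = (\<Sum>i\<in>S. B ** F i)"
  by (induction S rule: infinite_finite_induct) (simp_all add: matrix_add_ldistrib)

lemma cadj_cadj[simp]: "cadj (cadj A) = A"
  by (simp add: cadj_def vec_eq_iff)
lemma cadj_add: "cadj (A + B) = cadj A + cadj B"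
  by (simp add: cadj_def vec_eq_iff)
lemma cadj_zero[simp]: "cadj 0 = 0"
  by (simp add: cadj_def vec_eq_iff)
lemma cadj_sum: "cadj (\<Sum>i\<in>S. F i) = (\<Sum>i\<in>S. cadj (F i))"
  by (induction S rule: infinite_finite_induct) (simp_all add: cadj_add)
lemma cadj_cscale: "cadj (cscale c A) = cscale (cnj c) (cadj A)"
  by (simp add: cadj_def cscale_def vec_eq_iff)
lemma cadj_mult: "cadj (A ** B) = cadj B ** cadj A"
  by (simp add: cadj_def matrix_matrix_mult_def vec_eq_iff ac_simps)
lemma cadj_mat1[simp]: "cadj (mat 1) = mat 1"
  by (simp add: cadj_def mat_def vec_eq_iff)
lemma cadj_minus: "cadj (- A) = - cadj A"
  by (simp add: cadj_def vec_eq_iff)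

lemma trace_zero[simp]: "trace (0::complex^'n^'n) = 0"
  by (simp add: trace_def)
lemma trace_sum: "trace (\<Sum>i\<in>S. F i) = (\<Sum>i\<in>S. trace (F i :: complex^'n^'n))"
  by (induction S rule: infinite_finite_induct) (simp_all add: trace_add)
lemma trace_cscale: "trace (cscale c A) = c * trace A"
  by (simp add: trace_def cscale_def sum_distrib_left)
lemma trace_cadj: "trace (cadj A) = cnj (trace A)"
  by (simp add: trace_def cadj_def)

lemma mpow_comm: "A ** mpow A n = mpow A n ** A"
  by (induction n) (simp_all add: matrix_mul_assoc)
lemma cadj_mpow: "cadj (mpow A n) = mpow (cadj A) n"
  by (induction n) (simp_all add: cadj_mult mpow_comm)

lemma bounded_linear_cadj: "bounded_linear (cadj :: complex^'n::finite^'m::finite \<Rightarrow> _)"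
proof (rule bounded_linear_intro[where K="of_nat (CARD('n) * CARD('m))"])
  fix x y :: "complex^'n^'m" and r
  show "cadj (x + y) = cadj x + cadj y" by (rule cadj_add)
  show "cadj (r *\<^sub>R x) = r *\<^sub>R cadj x"
    unfolding cscale_real[symmetric] by (simp add: cadj_cscale)
  have "norm (cadj x) \<le> (\<Sum>i\<in>UNIV. \<Sum>j\<in>UNIV. norm (cadj x $ i $ j))" by (rule mat_norm_le_entries)
  also have "\<dots> \<le> (\<Sum>i\<in>(UNIV::'n set). \<Sum>j\<in>(UNIV::'m set). norm x)"
    by (intro sum_mono) (simp add: cadj_def mat_entry_le)
  finally show "norm (cadj x) \<le> norm x * of_nat (CARD('n) * CARD('m))" by (simp add: ac_simps)
qed

lemma mexp_sums: "(\<lambda>n. cscale (1 / of_nat (fact n)) (mpow A n)) sums mexp A"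
proof -
  have "(\<lambda>n. Rep_cm (Abs_cm A ^ n /\<^sub>R fact n)) sums Rep_cm (exp (Abs_cm A))"
    by (rule bounded_linear.sums[OF bounded_linear_Rep_cm exp_converges])
  moreover have "Rep_cm (Abs_cm A ^ n /\<^sub>R fact n) = cscale (1 / of_nat (fact n)) (mpow A n)" for n
  proof -
    have "cscale (1 / of_nat (fact n)) (mpow A n) = inverse (fact n) *\<^sub>R mpow A n"
      using cscale_real[of "inverse (fact n)" "mpow A n"] by (simp add: divide_inverse)
    then show ?thesis
      by (simp add: Rep_cm_scaleR Rep_cm_power Abs_cm_inverse)
  qed
  ultimately show ?thesis by (simp add: mexp_Rep)
qed

lemma cadj_mexp: "cadj (mexp (A::complex^'n::finite^'n)) = mexp (cadj A)"
proof -
  have "(\<lambda>n. cadj (cscale (1 / of_nat (fact n)) (mpow A n))) sums cadj (mexp A)"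
    by (rule bounded_linear.sums[OF bounded_linear_cadj mexp_sums])
  moreover have "cadj (cscale (1 / of_nat (fact n)) (mpow A n)) = cscale (1 / of_nat (fact n)) (mpow (cadj A) n)" for n
    by (simp add: cadj_cscale cadj_mpow)
  ultimately have "(\<lambda>n. cscale (1 / of_nat (fact n)) (mpow (cadj A) n)) sums cadj (mexp A)" by simp
  then show ?thesis using mexp_sums[of "cadj A"] sums_unique2 by blast
qed

lemma bounded_bilinear_mm: "bounded_bilinear ((**) :: complex^'n::finite^'n \<Rightarrow> complex^'n^'n \<Rightarrow> complex^'n^'n)"
proof (rule bounded_bilinear.intro)
  fix a a' b b' :: "complex^'n^'n" and r :: real
  show "(a + a') ** b = a ** b + a' ** b" by (rule mm_add_left)
  show "a ** (b + b') = a ** b + a ** b'" by (rule matrix_add_ldistrib)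
  show "(r *\<^sub>R a) ** b = r *\<^sub>R (a ** b)"
    using mm_cscale_left[of "complex_of_real r" a b] by (simp add: cscale_real)
  show "a ** (r *\<^sub>R b) = r *\<^sub>R (a ** b)"
    using mm_cscale_right[of a "complex_of_real r" b] by (simp add: cscale_real)
  have "norm (a ** b :: complex^'n^'n) \<le> norm a * norm b * of_nat (CARD('n) * CARD('n) * CARD('n))"
    for a b :: "complex^'n^'n"
  proof -
    have "norm (a ** b) \<le> (\<Sum>i\<in>UNIV. \<Sum>j\<in>UNIV. norm ((a ** b) $ i $ j))" by (rule mat_norm_le_entries)
    also have "\<dots> \<le> (\<Sum>i\<in>(UNIV::'n set). \<Sum>j\<in>(UNIV::'n set). \<Sum>k\<in>(UNIV::'n set). norm a * norm b)"
    proof (intro sum_mono)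
      fix i j
      have "norm ((a ** b) $ i $ j) \<le> (\<Sum>k\<in>UNIV. norm (a $ i $ k * b $ k $ j))"
        by (simp add: matrix_matrix_mult_def norm_sum)
      also have "\<dots> \<le> (\<Sum>k\<in>(UNIV::'n set). norm a * norm b)"
        by (intro sum_mono) (simp add: norm_mult mult_mono mat_entry_le)
      finally show "norm ((a ** b) $ i $ j) \<le> (\<Sum>k\<in>(UNIV::'n set). norm a * norm b)" .
    qed
    finally show ?thesis
      by (simp add: ac_simps)
  qed
  then show "\<exists>K. \<forall>a b. norm ((a::complex^'n^'n) ** (b::complex^'n^'n)) \<le> norm a * norm b * K" by blast
qed

lemma bounded_bilinear_cscale: "bounded_bilinear (cscale :: complex \<Rightarrow> complex^'n::finite^'m::finite \<Rightarrow> _)"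
proof (rule bounded_bilinear.intro)
  fix a a' :: complex and b b' :: "complex^'n^'m" and r :: real
  show "cscale (a + a') b = cscale a b + cscale a' b" by (rule cscale_add_left)
  show "cscale a (b + b') = cscale a b + cscale a b'" by (rule cscale_add_right)
  show "cscale (r *\<^sub>R a) b = r *\<^sub>R (cscale a b)"
    unfolding cscale_real[symmetric] cscale_cscale by (simp add: scaleR_conv_of_real)
  show "cscale a (r *\<^sub>R b) = r *\<^sub>R (cscale a b)"
    unfolding cscale_real[symmetric] cscale_cscale by (simp add: mult.commute)
  have "norm (cscale a b :: complex^'n^'m) \<le> norm a * norm b * of_nat (CARD('m) * CARD('n))"
    for a :: complex and b :: "complex^'n^'m"
  proof -
    have "norm (cscale a b) \<le> (\<Sum>i\<in>UNIV. \<Sum>j\<in>UNIV. norm (cscale a b $ i $ j))" by (rule mat_norm_le_entries)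
    also have "\<dots> \<le> (\<Sum>i\<in>(UNIV::'m set). \<Sum>j\<in>(UNIV::'n set). norm a * norm b)"
      by (intro sum_mono) (simp add: cscale_def norm_mult mult_left_mono mat_entry_le)
    finally show ?thesis
      by (simp add: ac_simps)
  qed
  then show "\<exists>K. \<forall>a b. norm (cscale a b :: complex^'n^'m) \<le> norm a * norm b * K" by metis
qed

fun lder :: "('d \<Rightarrow> complex^'D^'D) \<Rightarrow> ('d \<Rightarrow> complex^'D^'D) \<Rightarrow> 'd list \<Rightarrow> complex^'D^'D" where
  "lder w dw [] = 0"
| "lder w dw (m # ms) = lder w dw ms ** w m + lprod w ms ** dw m"

lemma lprod_deriv:
  fixes Wf :: "'d \<Rightarrow> real \<Rightarrow> complex^'D::finite^'D"
  assumes "\<And>m. (Wf m has_vector_derivative dw m) (at t)"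
  shows "((\<lambda>\<theta>. lprod (\<lambda>m. Wf m \<theta>) ms) has_vector_derivative lder (\<lambda>m. Wf m t) dw ms) (at t)"
proof (induction ms)
  case Nil
  then show ?case by (simp add: has_vector_derivative_const)
next
  case (Cons m ms)
  have "((\<lambda>\<theta>. lprod (\<lambda>m. Wf m \<theta>) ms ** Wf m \<theta>) has_vector_derivative
      (lprod (\<lambda>m. Wf m t) ms ** dw m + lder (\<lambda>m. Wf m t) dw ms ** Wf m t)) (at t)"
    by (rule bounded_bilinear.has_vector_derivative[OF bounded_bilinear_mm Cons assms])
  then show ?case by (simp add: add.commute)
qed

lemma sum_lists_Suc:
  "(\<Sum>ms\<in>{ms::'a::finite list. length ms = Suc T}. f ms) = (\<Sum>m\<in>UNIV. \<Sum>ms\<in>{ms. length ms = T}. f (m # ms))"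
proof -
  have e: "{ms::'a list. length ms = Suc T} = (\<lambda>(m, ms). m # ms) ` (UNIV \<times> {ms. length ms = T})"
    by (auto simp: length_Suc_conv image_def)
  have i: "inj_on (\<lambda>(m, ms). m # ms) (UNIV \<times> {ms::'a list. length ms = T})"
    by (auto simp: inj_on_def)
  show ?thesis
    unfolding e sum.reindex[OF i] by (simp add: sum.cartesian_product split_def)
qed

lemma lists_0: "{ms. length ms = 0} = {[]}" by auto

lemma inner_form:
  fixes X Y :: "complex^'D::finite^'D" and \<xi> :: "'A::finite \<Rightarrow> 'D \<Rightarrow> complex"
  assumes rho: "\<And>s s'. \<rho> $ s $ s' = (\<Sum>a\<in>UNIV. \<xi> a s * cnj (\<xi> a s'))"
  shows "(\<Sum>a\<in>UNIV. \<Sum>s\<in>UNIV. cnj (\<Sum>s'\<in>UNIV. X $ s $ s' * \<xi> a s') * (\<Sum>s''\<in>UNIV. Y $ s $ s'' * \<xi> a s''))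
        = trace (Y ** \<rho> ** cadj X)"
proof -
  have "trace (Y ** \<rho> ** cadj X) = (\<Sum>s\<in>UNIV. \<Sum>k\<in>UNIV. \<Sum>l\<in>UNIV. \<Sum>a\<in>UNIV. Y $ s $ l * \<xi> a l * cnj (\<xi> a k) * cnj (X $ s $ k))"
    by (simp add: trace_def matrix_matrix_mult_def cadj_def rho sum_distrib_left sum_distrib_right ac_simps)
  also have "\<dots> = (\<Sum>s\<in>UNIV. \<Sum>a\<in>UNIV. \<Sum>k\<in>UNIV. \<Sum>l\<in>UNIV. Y $ s $ l * \<xi> a l * cnj (\<xi> a k) * cnj (X $ s $ k))"
    apply (rule sum.cong[OF refl])
    apply (rule trans[OF sum.cong[OF refl sum.swap]])
    apply (rule sum.swap)
    done
  also have "\<dots> = (\<Sum>a\<in>UNIV. \<Sum>s\<in>UNIV. \<Sum>k\<in>UNIV. \<Sum>l\<in>UNIV. Y $ s $ l * \<xi> a l * cnj (\<xi> a k) * cnj (X $ s $ k))"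
    by (rule sum.swap)
  also have "\<dots> = (\<Sum>a\<in>UNIV. \<Sum>s\<in>UNIV. cnj (\<Sum>s'\<in>UNIV. X $ s $ s' * \<xi> a s') * (\<Sum>s''\<in>UNIV. Y $ s $ s'' * \<xi> a s''))"
    by (simp add: sum_distrib_left sum_distrib_right ac_simps)
  finally show ?thesis by simp
qed

lemma sum_tr: "(\<Sum>m\<in>S. trace (A ** F m ** B)) = trace (A ** (\<Sum>m\<in>S. F m) ** (B::complex^'n::finite^'n))"
  by (simp add: mm_sum_right mm_sum_left trace_sum)

lemma expand4:
  fixes q a p d X :: "complex^'n::finite^'n"
  shows "trace ((q ** a + p ** d) ** X ** cadj (q ** a + p ** d)) =
    trace (q ** (a ** X ** cadj a) ** cadj q) + trace (q ** (a ** X ** cadj d) ** cadj p)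
    + trace (p ** (d ** X ** cadj a) ** cadj q) + trace (p ** (d ** X ** cadj d) ** cadj p)"
  by (simp add: cadj_add cadj_mult mm_add_left matrix_add_ldistrib matrix_mul_assoc trace_add)

lemma expand2:
  fixes q a p d X :: "complex^'n::finite^'n"
  shows "trace ((p ** a) ** X ** cadj (q ** a + p ** d)) =
    trace (p ** (a ** X ** cadj a) ** cadj q) + trace (p ** (a ** X ** cadj d) ** cadj p)"
  by (simp add: cadj_add cadj_mult mm_add_left matrix_add_ldistrib matrix_mul_assoc trace_add)

lemma expand1:
  fixes a p X :: "complex^'n::finite^'n"
  shows "trace ((p ** a) ** X ** cadj (p ** a)) = trace (p ** (a ** X ** cadj a) ** cadj p)"
  by (simp add: cadj_mult matrix_mul_assoc)

lemma cinner_form: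
  fixes F G :: "'d::finite list \<Rightarrow> complex^'D::finite^'D" and \<xi> :: "'D \<Rightarrow> 'D \<Rightarrow> complex"
  assumes rho: "\<And>s s'. \<rho> $ s $ s' = (\<Sum>a\<in>UNIV. \<xi> a s * cnj (\<xi> a s'))"
  shows "cinner (sites T :: ('D \<times> 'D \<times> 'd list) set)
     (\<lambda>(a, s, ms). \<Sum>s'\<in>UNIV. F ms $ s $ s' * \<xi> a s')
     (\<lambda>(a, s, ms). \<Sum>s'\<in>UNIV. G ms $ s $ s' * \<xi> a s')
   = (\<Sum>ms\<in>{ms. length ms = T}. trace (G ms ** \<rho> ** cadj (F ms)))"
proof -
  let ?f = "\<lambda>a s ms. cnj (\<Sum>s'\<in>UNIV. F ms $ s $ s' * \<xi> a s') * (\<Sum>s'\<in>UNIV. G ms $ s $ s' * \<xi> a s')"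
  have st: "sites T = (UNIV :: 'D set) \<times> ((UNIV :: 'D set) \<times> {ms::'d list. length ms = T})"
    by (auto simp: sites_def)
  have "cinner (sites T :: ('D \<times> 'D \<times> 'd list) set)
     (\<lambda>(a, s, ms). \<Sum>s'\<in>UNIV. F ms $ s $ s' * \<xi> a s')
     (\<lambda>(a, s, ms). \<Sum>s'\<in>UNIV. G ms $ s $ s' * \<xi> a s')
     = (\<Sum>a\<in>UNIV. \<Sum>s\<in>UNIV. \<Sum>ms\<in>{ms. length ms = T}. ?f a s ms)"
    unfolding cinner_def st by (simp add: sum.cartesian_product split_def)
  also have "\<dots> = (\<Sum>ms\<in>{ms. length ms = T}. \<Sum>a\<in>UNIV. \<Sum>s\<in>UNIV. ?f a s ms)"
    apply (rule trans[OF sum.cong[OF refl sum.swap]])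
    apply (rule sum.swap)
    done
  also have "\<dots> = (\<Sum>ms\<in>{ms. length ms = T}. trace (G ms ** \<rho> ** cadj (F ms)))"
    by (rule sum.cong[OF refl]) (rule inner_form[OF rho])
  finally show ?thesis .
qed

lemma qfi_generic:
  fixes Wf :: "'d::finite \<Rightarrow> real \<Rightarrow> complex^'D::finite^'D" and dw :: "'d \<Rightarrow> complex^'D^'D"
    and \<rho> :: "complex^'D^'D" and \<xi> :: "'D \<Rightarrow> 'D \<Rightarrow> complex"
  assumes der: "\<And>m. (Wf m has_vector_derivative dw m) (at \<theta>0)"
    and iso: "(\<Sum>m\<in>UNIV. cadj (Wf m \<theta>0) ** Wf m \<theta>0) = mat 1"
    and orth: "(\<Sum>m\<in>UNIV. cadj (Wf m \<theta>0) ** dw m) = 0"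
    and fixp: "channel (\<lambda>m. Wf m \<theta>0) \<rho> = \<rho>"
    and rho: "\<And>s s'. \<rho> $ s $ s' = (\<Sum>a\<in>UNIV. \<xi> a s * cnj (\<xi> a s'))"
  shows "pure_qfi (sites T) (mps_state Wf \<xi>) \<theta>0
     = 4 * of_nat T * (\<Sum>m\<in>UNIV. trace (dw m ** \<rho> ** cadj (dw m)))"
proof -
  define w where "w = (\<lambda>m. Wf m \<theta>0)"
  define P where "P = lprod w"
  define Q where "Q = lder w dw"
  define LT where "LT T = {ms::'d list. length ms = T}" for T
  define E where "E X = (\<Sum>m\<in>UNIV. w m ** X ** cadj (w m))" for X
  have dpsi: "vector_derivative (\<lambda>\<theta>. mps_state Wf \<xi> \<theta> x) (at \<theta>0)
     = (case x of (a, s, ms) \<Rightarrow> \<Sum>s'\<in>UNIV. Q ms $ s $ s' * \<xi> a s')" for x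
  proof (cases x)
    case (fields a s ms)
    have "((\<lambda>\<theta>. lprod (\<lambda>m. Wf m \<theta>) ms) has_vector_derivative Q ms) (at \<theta>0)"
      unfolding Q_def w_def by (rule lprod_deriv[OF der])
    then have "((\<lambda>\<theta>. \<Sum>s'\<in>UNIV. lprod (\<lambda>m. Wf m \<theta>) ms $ s $ s' * \<xi> a s')
        has_vector_derivative (\<Sum>s'\<in>UNIV. Q ms $ s $ s' * \<xi> a s')) (at \<theta>0)"
      by (intro has_vector_derivative_sum has_vector_derivative_mult_left
          bounded_linear.has_vector_derivative[OF bounded_linear_vec_nth])
    then show ?thesis by (simp add: fields mps_state_def vector_derivative_at)
  qed
  have psi: "mps_state Wf \<xi> \<theta>0 = (\<lambda>(a, s, ms). \<Sum>s'\<in>UNIV. P ms $ s $ s' * \<xi> a s')"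
    by (simp add: mps_state_def P_def w_def)
  have trE: "trace (E X) = trace X" for X
  proof -
    have "trace (E X) = (\<Sum>m\<in>UNIV. trace (cadj (w m) ** w m ** X))"
      unfolding E_def trace_sum by (simp add: trace_mul_sym[of _ "cadj _"] matrix_mul_assoc)
    also have "\<dots> = trace X"
      using sum_tr[where A="mat 1" and F="\<lambda>m. cadj (w m) ** w m" and S=UNIV and B=X] iso by (simp add: w_def)
    finally show ?thesis .
  qed
  have trO: "trace (\<Sum>m\<in>UNIV. w m ** X ** cadj (dw m)) = 0" for X
  proof -
    have "trace (\<Sum>m\<in>UNIV. w m ** X ** cadj (dw m)) = (\<Sum>m\<in>UNIV. trace (mat 1 ** cadj (cadj (w m) ** dw m) ** X))"
      unfolding trace_sum by (simp add: trace_mul_sym[of _ "cadj _"] matrix_mul_assoc cadj_mult)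
    also have "\<dots> = 0"
      using sum_tr[where A="mat 1" and F="\<lambda>m. cadj (cadj (w m) ** dw m)" and S=UNIV and B=X] orth
      by (simp add: w_def cadj_sum[symmetric])
    finally show ?thesis .
  qed
  define tN where "tN T X = (\<Sum>ms\<in>LT T. trace (P ms ** X ** cadj (P ms)))" for T X
  define tR where "tR T X = (\<Sum>ms\<in>LT T. trace (P ms ** X ** cadj (Q ms)))" for T X
  define tS where "tS T X = (\<Sum>ms\<in>LT T. trace (Q ms ** X ** cadj (Q ms)))" for T X
  have tN: "tN T X = trace X" for T X
  proof (induction T arbitrary: X)
    case 0
    then show ?case by (simp add: tN_def LT_def lists_0 P_def)
  next
    case (Suc T)
    have "tN (Suc T) X = (\<Sum>ms\<in>LT T. \<Sum>m\<in>UNIV. trace (P ms ** (w m ** X ** cadj (w m)) ** cadj (P ms)))"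
      unfolding tN_def LT_def sum_lists_Suc
      by (subst sum.swap) (simp add: P_def expand1)
    also have "\<dots> = tN T (E X)"
      unfolding tN_def E_def by (simp add: sum_tr)
    finally show ?case using Suc trE by simp
  qed
  have tR: "tR T X = 0" for T X
  proof (induction T arbitrary: X)
    case 0
    then show ?case by (simp add: tR_def LT_def lists_0 Q_def)
  next
    case (Suc T)
    have "tR (Suc T) X = (\<Sum>ms\<in>LT T. (\<Sum>m\<in>UNIV. trace (P ms ** (w m ** X ** cadj (w m)) ** cadj (Q ms)))
                              + (\<Sum>m\<in>UNIV. trace (P ms ** (w m ** X ** cadj (dw m)) ** cadj (P ms))))"
      unfolding tR_def LT_def sum_lists_Suc
      by (subst sum.swap) (simp add: P_def Q_def expand2 sum.distrib)
    also have "\<dots> = tR T (E X) + tN T (\<Sum>m\<in>UNIV. w m ** X ** cadj (dw m))"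
      unfolding tR_def tN_def E_def by (simp add: sum_tr sum.distrib)
    finally show ?case using Suc tN trO by simp
  qed
  have tR': "(\<Sum>ms\<in>LT T. trace (Q ms ** X ** cadj (P ms))) = 0" for T X
  proof -
    have "(\<Sum>ms\<in>LT T. trace (Q ms ** X ** cadj (P ms))) = cnj (tR T (cadj X))"
      unfolding tR_def by (simp add: trace_cadj[symmetric] cadj_mult matrix_mul_assoc)
    then show ?thesis using tR by simp
  qed
  define \<alpha> where "\<alpha> = (\<Sum>m\<in>UNIV. trace (dw m ** \<rho> ** cadj (dw m)))"
  have Erho: "E \<rho> = \<rho>" using fixp by (simp add: E_def channel_def w_def)
  have tS: "tS T \<rho> = of_nat T * \<alpha>" for T
  proof (induction T)
    case 0
    then show ?case by (simp add: tS_def LT_def lists_0 Q_def)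
  next
    case (Suc T)
    have "tS (Suc T) \<rho> = (\<Sum>ms\<in>LT T. (\<Sum>m\<in>UNIV. trace (Q ms ** (w m ** \<rho> ** cadj (w m)) ** cadj (Q ms)))
                              + (\<Sum>m\<in>UNIV. trace (Q ms ** (w m ** \<rho> ** cadj (dw m)) ** cadj (P ms)))
                              + (\<Sum>m\<in>UNIV. trace (P ms ** (dw m ** \<rho> ** cadj (w m)) ** cadj (Q ms)))
                              + (\<Sum>m\<in>UNIV. trace (P ms ** (dw m ** \<rho> ** cadj (dw m)) ** cadj (P ms))))"
      unfolding tS_def LT_def sum_lists_Suc
      by (subst sum.swap) (simp add: P_def Q_def expand4 sum.distrib)
    also have "\<dots> = tS T (E \<rho>) + (\<Sum>ms\<in>LT T. trace (Q ms ** (\<Sum>m\<in>UNIV. w m ** \<rho> ** cadj (dw m)) ** cadj (P ms)))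
         + tR T (\<Sum>m\<in>UNIV. dw m ** \<rho> ** cadj (w m)) + tN T (\<Sum>m\<in>UNIV. dw m ** \<rho> ** cadj (dw m))"
      unfolding tR_def tN_def tS_def E_def by (simp add: sum_tr sum.distrib)
    also have "\<dots> = tS T \<rho> + \<alpha>"
      using tR tR' tN by (simp add: Erho \<alpha>_def trace_sum)
    finally show ?case using Suc by (simp add: distrib_right)
  qed
  have c1: "cinner (sites T) (\<lambda>x. vector_derivative (\<lambda>\<theta>. mps_state Wf \<xi> \<theta> x) (at \<theta>0))
      (\<lambda>x. vector_derivative (\<lambda>\<theta>. mps_state Wf \<xi> \<theta> x) (at \<theta>0)) = of_nat T * \<alpha>"
    unfolding dpsi using cinner_form[OF rho, of T Q Q] tS[of T]
    by (simp add: tS_def LT_def split_def)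
  have c2: "cinner (sites T) (\<lambda>x. vector_derivative (\<lambda>\<theta>. mps_state Wf \<xi> \<theta> x) (at \<theta>0))
      (mps_state Wf \<xi> \<theta>0) = 0"
    unfolding dpsi psi using cinner_form[OF rho, of T Q P] tR[of T \<rho>]
    by (simp add: tR_def LT_def split_def)
  show ?thesis
    unfolding pure_qfi_def Let_def c1 c2 by (simp add: \<alpha>_def)
qed

lemma comb1:
  fixes P Q :: "complex^'d::finite^'d" and F :: "'d \<Rightarrow> complex^'D::finite^'D"
  shows "(\<Sum>k\<in>UNIV. cscale (P $ m $ k) (\<Sum>l\<in>UNIV. cscale (Q $ k $ l) (F l)))
       = (\<Sum>l\<in>UNIV. cscale ((P ** Q) $ m $ l) (F l))"
proof -
  have "(\<Sum>k\<in>UNIV. cscale (P $ m $ k) (\<Sum>l\<in>UNIV. cscale (Q $ k $ l) (F l)))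
      = (\<Sum>k\<in>UNIV. \<Sum>l\<in>UNIV. cscale (P $ m $ k * Q $ k $ l) (F l))"
    by (simp add: cscale_sum_right cscale_cscale)
  also have "\<dots> = (\<Sum>l\<in>UNIV. \<Sum>k\<in>UNIV. cscale (P $ m $ k * Q $ k $ l) (F l))"
    by (rule sum.swap)
  also have "\<dots> = (\<Sum>l\<in>UNIV. cscale ((P ** Q) $ m $ l) (F l))"
    by (simp add: matrix_matrix_mult_def cscale_sum_left)
  finally show ?thesis .
qed

lemma comb_id:
  fixes F :: "'d::finite \<Rightarrow> complex^'D::finite^'D"
  shows "(\<Sum>l\<in>UNIV. cscale (mat 1 $ m $ l) (F l)) = F m"
  by (simp add: mat_def if_distrib[of "\<lambda>c. cscale c _"] cong: if_cong)

lemma sum3_perm: "(\<Sum>a\<in>A. \<Sum>b\<in>B. \<Sum>c\<in>C. f a b c) = (\<Sum>c\<in>C. \<Sum>b\<in>B. \<Sum>a\<in>A. f a b c)"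
proof -
  have "(\<Sum>a\<in>A. \<Sum>b\<in>B. \<Sum>c\<in>C. f a b c) = (\<Sum>a\<in>A. \<Sum>c\<in>C. \<Sum>b\<in>B. f a b c)"
    by (rule sum.cong[OF refl]) (rule sum.swap)
  also have "\<dots> = (\<Sum>c\<in>C. \<Sum>a\<in>A. \<Sum>b\<in>B. f a b c)" by (rule sum.swap)
  also have "\<dots> = (\<Sum>c\<in>C. \<Sum>b\<in>B. \<Sum>a\<in>A. f a b c)"
    by (rule sum.cong[OF refl]) (rule sum.swap)
  finally show ?thesis .
qed

lemma comb_id':
  fixes F :: "'d::finite \<Rightarrow> complex^'D::finite^'D"
  shows "(\<Sum>l\<in>UNIV. cscale (mat 1 $ l $ m) (F l)) = F m"
  by (simp add: mat_def if_distrib[of "\<lambda>c. cscale c _"] cong: if_cong)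

lemma comb2:
  fixes P Q :: "complex^'d::finite^'d" and X Y :: "'d \<Rightarrow> complex^'D::finite^'D"
  shows "(\<Sum>m\<in>UNIV. cadj (\<Sum>l\<in>UNIV. cscale (P $ m $ l) (X l)) ** (\<Sum>k\<in>UNIV. cscale (Q $ m $ k) (Y k)))
       = (\<Sum>l\<in>UNIV. \<Sum>k\<in>UNIV. cscale ((cadj P ** Q) $ l $ k) (cadj (X l) ** Y k))"
proof -
  have "(\<Sum>m\<in>UNIV. cadj (\<Sum>l\<in>UNIV. cscale (P $ m $ l) (X l)) ** (\<Sum>k\<in>UNIV. cscale (Q $ m $ k) (Y k)))
      = (\<Sum>m\<in>UNIV. \<Sum>k\<in>UNIV. \<Sum>l\<in>UNIV. cscale (cnj (P $ m $ l) * Q $ m $ k) (cadj (X l) ** Y k))"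
    by (simp add: cadj_sum cadj_cscale mm_sum_left mm_sum_right mm_cscale_left mm_cscale_right)
       (simp only: cscale_sum_right cscale_cscale mult.commute)
  also have "\<dots> = (\<Sum>l\<in>UNIV. \<Sum>k\<in>UNIV. \<Sum>m\<in>UNIV. cscale (cnj (P $ m $ l) * Q $ m $ k) (cadj (X l) ** Y k))"
    by (rule sum3_perm)
  also have "\<dots> = (\<Sum>l\<in>UNIV. \<Sum>k\<in>UNIV. cscale ((cadj P ** Q) $ l $ k) (cadj (X l) ** Y k))"
    by (simp add: matrix_matrix_mult_def cscale_sum_left cadj_def)
  finally show ?thesis .
qed

lemma comb3:
  fixes Q :: "complex^'d::finite^'d" and Y :: "'d \<Rightarrow> complex^'D::finite^'D"
  shows "(\<Sum>m\<in>UNIV. (\<Sum>k\<in>UNIV. cscale (Q $ m $ k) (Y k)) ** X ** cadj (\<Sum>l\<in>UNIV. cscale (Q $ m $ l) (Y l)))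
       = (\<Sum>k\<in>UNIV. \<Sum>l\<in>UNIV. cscale ((cadj Q ** Q) $ l $ k) (Y k ** X ** cadj (Y l)))"
proof -
  have "(\<Sum>m\<in>UNIV. (\<Sum>k\<in>UNIV. cscale (Q $ m $ k) (Y k)) ** X ** cadj (\<Sum>l\<in>UNIV. cscale (Q $ m $ l) (Y l)))
      = (\<Sum>m\<in>UNIV. \<Sum>l\<in>UNIV. \<Sum>k\<in>UNIV. cscale (cnj (Q $ m $ l) * Q $ m $ k) (Y k ** X ** cadj (Y l)))"
    by (simp add: cadj_sum cadj_cscale mm_sum_left mm_sum_right mm_cscale_left mm_cscale_right)
       (simp only: cscale_sum_right cscale_cscale mult.commute)
  also have "\<dots> = (\<Sum>k\<in>UNIV. \<Sum>l\<in>UNIV. \<Sum>m\<in>UNIV. cscale (cnj (Q $ m $ l) * Q $ m $ k) (Y k ** X ** cadj (Y l)))"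
    by (rule sum3_perm)
  also have "\<dots> = (\<Sum>k\<in>UNIV. \<Sum>l\<in>UNIV. cscale ((cadj Q ** Q) $ l $ k) (Y k ** X ** cadj (Y l)))"
    by (simp add: matrix_matrix_mult_def cscale_sum_left cadj_def)
  finally show ?thesis .
qed

theorem lemma2:
  fixes K :: "'d::finite \<Rightarrow> real \<Rightarrow> complex^'D::finite^'D"
    and \<theta>0 :: real
  assumes diff: "\<And>m \<theta>. K m differentiable (at \<theta>)"
    and kraus: "\<And>\<theta>. (\<Sum>m\<in>UNIV. cadj (K m \<theta>) ** K m \<theta>) = mat 1"
    and HKS: "\<exists>c :: 'd \<Rightarrow> 'd \<Rightarrow> complex.
        cscale \<i> (\<Sum>m\<in>UNIV. cadj (K m \<theta>0) ** vector_derivative (K m) (at \<theta>0))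
        = (\<Sum>i\<in>UNIV. \<Sum>j\<in>UNIV. cscale (c i j) (cadj (K i \<theta>0) ** K j \<theta>0))"
  shows "\<exists>h :: complex^'d^'d. cadj h = h \<and>
    (let u = (\<lambda>\<theta>::real. mexp (cscale (\<i> * complex_of_real \<theta>) h));
         W = (\<lambda>m \<theta>. \<Sum>k\<in>UNIV. cscale (cadj (u \<theta>) $ m $ k) (K k \<theta>));
         dW = (\<lambda>m. vector_derivative (W m) (at \<theta>0));
         E = channel (\<lambda>m. K m \<theta>0)
     in (\<forall>\<theta> m. K m \<theta> = (\<Sum>k\<in>UNIV. cscale (u \<theta> $ m $ k) (W k \<theta>)))
      \<and> (\<Sum>m\<in>UNIV. cadj (W m \<theta>0) ** dW m) = 0
      \<and> (\<forall>(\<rho> :: complex^'D^'D) (\<xi> :: 'D \<Rightarrow> 'D \<Rightarrow> complex).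
            E \<rho> = \<rho> \<and> trace \<rho> = 1
            \<and> (\<forall>s s'. \<rho> $ s $ s' = (\<Sum>a\<in>UNIV. \<xi> a s * cnj (\<xi> a s')))
          \<longrightarrow>
            (\<Sum>m\<in>UNIV. trace (W m \<theta>0 ** \<rho> ** cadj (dW m))) = 0
          \<and> (\<forall>\<tau>::nat. trace (\<Sum>m\<in>UNIV. dW m **
                 (E ^^ \<tau>) (\<Sum>n\<in>UNIV. W n \<theta>0 ** \<rho> ** cadj (dW n)) ** cadj (W m \<theta>0)) = 0)
          \<and> (\<forall>T::nat. pure_qfi (sites T) (mps_state W \<xi>) \<theta>0
                = 4 * of_nat T * (\<Sum>m\<in>UNIV. trace (dW m ** \<rho> ** cadj (dW m))))))"
proof -
  obtain c :: "'d \<Rightarrow> 'd \<Rightarrow> complex" where c: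
    "cscale \<i> (\<Sum>m\<in>UNIV. cadj (K m \<theta>0) ** vector_derivative (K m) (at \<theta>0))
        = (\<Sum>i\<in>UNIV. \<Sum>j\<in>UNIV. cscale (c i j) (cadj (K i \<theta>0) ** K j \<theta>0))"
    using HKS by blast
  define K' where "K' m = vector_derivative (K m) (at \<theta>0)" for m
  define K0 where "K0 m = K m \<theta>0" for m
  have Kd: "(K m has_vector_derivative K' m) (at \<theta>0)" for m
    unfolding K'_def using diff vector_derivative_works by blast
  define A where "A = (\<Sum>m\<in>UNIV. cadj (K0 m) ** K' m)"
  define Hs where "Hs = cscale \<i> A"
  define G where "G x = (\<Sum>i\<in>UNIV. \<Sum>j\<in>UNIV. cscale (x i j) (cadj (K0 i) ** K0 j))" for x
  have HsG: "Hs = G c" using c by (simp add: Hs_def A_def G_def K'_def K0_def)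
  \<comment> \<open>anti-Hermiticity of A from differentiating the Kraus condition\<close>
  have AA: "A + cadj A = 0"
  proof -
    have d1: "((\<lambda>\<theta>. \<Sum>m\<in>UNIV. cadj (K m \<theta>) ** K m \<theta>) has_vector_derivative
        (\<Sum>m\<in>UNIV. cadj (K0 m) ** K' m + cadj (K' m) ** K0 m)) (at \<theta>0)"
      unfolding K0_def
      by (intro has_vector_derivative_sum bounded_bilinear.has_vector_derivative[OF bounded_bilinear_mm]
          bounded_linear.has_vector_derivative[OF bounded_linear_cadj] Kd)
    have d2: "((\<lambda>\<theta>. \<Sum>m\<in>UNIV. cadj (K m \<theta>) ** K m \<theta>) has_vector_derivative 0) (at \<theta>0)"
      unfolding kraus by (rule has_vector_derivative_const)
    have "(\<Sum>m\<in>UNIV. cadj (K0 m) ** K' m + cadj (K' m) ** K0 m) = 0"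
      using vector_derivative_unique_at[OF d1 d2] .
    then show ?thesis by (simp add: A_def sum.distrib cadj_sum cadj_mult)
  qed
  have Hs_herm: "cadj Hs = Hs"
  proof -
    have "cadj A = - A" using AA by (simp add: eq_neg_iff_add_eq_0 add.commute)
    then show ?thesis unfolding Hs_def cadj_cscale by (simp add: cscale_def vec_eq_iff)
  qed
  have Gadj: "cadj (G x) = G (\<lambda>i j. cnj (x j i))" for x
  proof -
    have "cadj (G x) = (\<Sum>i\<in>UNIV. \<Sum>j\<in>UNIV. cscale (cnj (x i j)) (cadj (K0 j) ** K0 i))"
      by (simp add: G_def cadj_sum cadj_cscale cadj_mult)
    also have "\<dots> = G (\<lambda>i j. cnj (x j i))"
      unfolding G_def by (rule sum.swap)
    finally show ?thesis .
  qed
  define h :: "complex^'d^'d" where "h = (\<chi> i j. - (c i j + cnj (c j i)) / 2)"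
  have herm: "cadj h = h"
    by (simp add: h_def cadj_def vec_eq_iff add.commute)
  have Gh: "G (\<lambda>i j. h $ i $ j) = - Hs"
  proof -
    have sc: "- ((x + y) / 2) = ((- x - y) / 2 :: complex)" for x y by (simp add: field_simps)
    have "G (\<lambda>i j. h $ i $ j) = cscale (- 1 / 2) (G c + G (\<lambda>i j. cnj (c j i)))"
      by (simp add: G_def h_def cscale_sum_right sum.distrib[symmetric] cscale_add_right[symmetric]
          cscale_cscale cscale_add_left[symmetric]) (simp add: sc)
    also have "\<dots> = cscale (- 1 / 2) (Hs + Hs)"
      using HsG Gadj[of c] Hs_herm by simp
    also have "\<dots> = - Hs"
      by (simp add: cscale_def vec_eq_iff)
    finally show ?thesis .
  qed
  define B where "B = cscale (- \<i>) h"
  define u where "u = (\<lambda>\<theta>::real. mexp (cscale (\<i> * complex_of_real \<theta>) h))"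
  define V where "V \<theta> = mexp (cscale (complex_of_real \<theta>) B)" for \<theta> :: real
  have arg: "cscale (\<i> * complex_of_real \<theta>) h = - cscale (complex_of_real \<theta>) B" for \<theta>
    by (simp add: B_def cscale_cscale cscale_minus_left[symmetric] mult.commute)
  have uV: "cadj (u \<theta>) = V \<theta>" for \<theta>
  proof -
    have "cadj (cscale (\<i> * complex_of_real \<theta>) h) = cscale (complex_of_real \<theta>) B"
      by (simp add: cadj_cscale herm B_def cscale_cscale mult.commute)
    then show ?thesis by (simp add: u_def V_def cadj_mexp)
  qed
  have uV1: "u \<theta> ** V \<theta> = mat 1" for \<theta>
    using mexp_inv[of "- cscale (complex_of_real \<theta>) B"] by (simp add: u_def V_def arg)
  have VV1: "cadj (V \<theta>) ** V \<theta> = mat 1" for \<theta>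
    using uV1 uV[of \<theta>] by (metis cadj_cadj)
  define W where "W = (\<lambda>m \<theta>. \<Sum>k\<in>UNIV. cscale (cadj (u \<theta>) $ m $ k) (K k \<theta>))"
  define dW where "dW = (\<lambda>m. vector_derivative (W m) (at \<theta>0))"
  define E where "E = channel (\<lambda>m. K m \<theta>0)"
  have WV: "W m \<theta> = (\<Sum>k\<in>UNIV. cscale (V \<theta> $ m $ k) (K k \<theta>))" for m \<theta>
    by (simp add: W_def uV)
  have claim1: "K m \<theta> = (\<Sum>k\<in>UNIV. cscale (u \<theta> $ m $ k) (W k \<theta>))" for m \<theta>
    unfolding WV comb1 uV1 comb_id ..
  define dW0 where "dW0 m = (\<Sum>k\<in>UNIV. cscale (V \<theta>0 $ m $ k) (K' k) + cscale ((V \<theta>0 ** B) $ m $ k) (K0 k))" for m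
  have Vd: "(V has_vector_derivative V \<theta>0 ** B) (at \<theta>0)"
    unfolding V_def[abs_def] by (rule mexp_deriv)
  have Vde: "((\<lambda>\<theta>. V \<theta> $ m $ k) has_vector_derivative (V \<theta>0 ** B) $ m $ k) (at \<theta>0)" for m k
    by (intro bounded_linear.has_vector_derivative[OF bounded_linear_vec_nth] Vd)
  have Wd: "(W m has_vector_derivative dW0 m) (at \<theta>0)" for m
  proof -
    have "((\<lambda>\<theta>. \<Sum>k\<in>UNIV. cscale (V \<theta> $ m $ k) (K k \<theta>)) has_vector_derivative dW0 m) (at \<theta>0)"
      unfolding dW0_def K0_def
      by (intro has_vector_derivative_sum bounded_bilinear.has_vector_derivative[OF bounded_bilinear_cscale] Vde Kd)
    then show ?thesis by (simp add: WV[abs_def])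
  qed
  have dWe: "dW m = dW0 m" for m
    unfolding dW_def using Wd vector_derivative_at by blast
  have W0: "W m \<theta>0 = (\<Sum>k\<in>UNIV. cscale (V \<theta>0 $ m $ k) (K0 k))" for m
    by (simp add: WV K0_def)
  have orth: "(\<Sum>m\<in>UNIV. cadj (W m \<theta>0) ** dW m) = 0"
  proof -
    have s1: "(\<Sum>m\<in>UNIV. cadj (W m \<theta>0) ** dW m)
      = (\<Sum>m\<in>UNIV. cadj (\<Sum>l\<in>UNIV. cscale (V \<theta>0 $ m $ l) (K0 l)) ** (\<Sum>k\<in>UNIV. cscale (V \<theta>0 $ m $ k) (K' k)))
      + (\<Sum>m\<in>UNIV. cadj (\<Sum>l\<in>UNIV. cscale (V \<theta>0 $ m $ l) (K0 l)) ** (\<Sum>k\<in>UNIV. cscale ((V \<theta>0 ** B) $ m $ k) (K0 k)))"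
      by (simp add: dWe dW0_def W0 sum.distrib matrix_add_ldistrib)
    have s2: "(\<Sum>m\<in>UNIV. cadj (\<Sum>l\<in>UNIV. cscale (V \<theta>0 $ m $ l) (K0 l)) ** (\<Sum>k\<in>UNIV. cscale (V \<theta>0 $ m $ k) (K' k))) = A"
      unfolding comb2 VV1 by (simp add: comb_id A_def)
    have s3: "(\<Sum>m\<in>UNIV. cadj (\<Sum>l\<in>UNIV. cscale (V \<theta>0 $ m $ l) (K0 l)) ** (\<Sum>k\<in>UNIV. cscale ((V \<theta>0 ** B) $ m $ k) (K0 k)))
       = cscale (- \<i>) (G (\<lambda>i j. h $ i $ j))"
      unfolding comb2 matrix_mul_assoc VV1 matrix_mul_lid
      by (simp add: G_def B_def cscale_sum_right cscale_cscale cscale_def[of "- \<i>" h])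
    show ?thesis
      unfolding s1 s2 s3 Gh by (simp add: Hs_def cscale_def vec_eq_iff)
  qed
  have iso: "(\<Sum>m\<in>UNIV. cadj (W m \<theta>0) ** W m \<theta>0) = mat 1"
    unfolding W0 comb2 VV1 by (simp add: comb_id K0_def kraus)
  have chan: "channel (\<lambda>m. W m \<theta>0) X = E X" for X
    unfolding channel_def W0 comb3 VV1 by (simp add: E_def channel_def K0_def comb_id')
  have main: "(\<forall>\<theta> m. K m \<theta> = (\<Sum>k\<in>UNIV. cscale (u \<theta> $ m $ k) (W k \<theta>)))
      \<and> (\<Sum>m\<in>UNIV. cadj (W m \<theta>0) ** dW m) = 0
      \<and> (\<forall>(\<rho> :: complex^'D^'D) (\<xi> :: 'D \<Rightarrow> 'D \<Rightarrow> complex).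
            E \<rho> = \<rho> \<and> trace \<rho> = 1
            \<and> (\<forall>s s'. \<rho> $ s $ s' = (\<Sum>a\<in>UNIV. \<xi> a s * cnj (\<xi> a s')))
          \<longrightarrow>
            (\<Sum>m\<in>UNIV. trace (W m \<theta>0 ** \<rho> ** cadj (dW m))) = 0
          \<and> (\<forall>\<tau>::nat. trace (\<Sum>m\<in>UNIV. dW m **
                 (E ^^ \<tau>) (\<Sum>n\<in>UNIV. W n \<theta>0 ** \<rho> ** cadj (dW n)) ** cadj (W m \<theta>0)) = 0)
          \<and> (\<forall>T::nat. pure_qfi (sites T) (mps_state W \<xi>) \<theta>0
                = 4 * of_nat T * (\<Sum>m\<in>UNIV. trace (dW m ** \<rho> ** cadj (dW m)))))"
  proof (intro conjI allI impI claim1 orth)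
    fix \<rho> :: "complex^'D^'D" and \<xi> :: "'D \<Rightarrow> 'D \<Rightarrow> complex"
    assume H: "E \<rho> = \<rho> \<and> trace \<rho> = 1 \<and> (\<forall>s s'. \<rho> $ s $ s' = (\<Sum>a\<in>UNIV. \<xi> a s * cnj (\<xi> a s')))"
    have "(\<Sum>m\<in>UNIV. trace (W m \<theta>0 ** \<rho> ** cadj (dW m)))
        = (\<Sum>m\<in>UNIV. trace (mat 1 ** cadj (cadj (W m \<theta>0) ** dW m) ** \<rho>))"
      by (simp add: trace_mul_sym[of "W _ \<theta>0 ** \<rho>"] cadj_mult matrix_mul_assoc)
    also have "\<dots> = trace (mat 1 ** (\<Sum>m\<in>UNIV. cadj (cadj (W m \<theta>0) ** dW m)) ** \<rho>)"
      by (rule sum_tr)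
    finally show "(\<Sum>m\<in>UNIV. trace (W m \<theta>0 ** \<rho> ** cadj (dW m))) = 0"
      by (simp add: orth cadj_sum[symmetric])
    fix \<tau> :: nat
    define Y where "Y = (E ^^ \<tau>) (\<Sum>n\<in>UNIV. W n \<theta>0 ** \<rho> ** cadj (dW n))"
    have "trace (\<Sum>m\<in>UNIV. dW m ** Y ** cadj (W m \<theta>0))
        = (\<Sum>m\<in>UNIV. trace (mat 1 ** (cadj (W m \<theta>0) ** dW m) ** Y))"
      by (simp add: trace_sum trace_mul_sym[of "dW _ ** Y"] matrix_mul_assoc)
    also have "\<dots> = trace (mat 1 ** (\<Sum>m\<in>UNIV. cadj (W m \<theta>0) ** dW m) ** Y)"
      by (rule sum_tr)
    finally show "trace (\<Sum>m\<in>UNIV. dW m ** (E ^^ \<tau>) (\<Sum>n\<in>UNIV. W n \<theta>0 ** \<rho> ** cadj (dW n)) ** cadj (W m \<theta>0)) = 0"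
      by (simp add: orth Y_def)
  next
    fix \<rho> :: "complex^'D^'D" and \<xi> :: "'D \<Rightarrow> 'D \<Rightarrow> complex" and T :: nat
    assume H: "E \<rho> = \<rho> \<and> trace \<rho> = 1 \<and> (\<forall>s s'. \<rho> $ s $ s' = (\<Sum>a\<in>UNIV. \<xi> a s * cnj (\<xi> a s')))"
    show "pure_qfi (sites T) (mps_state W \<xi>) \<theta>0 = 4 * of_nat T * (\<Sum>m\<in>UNIV. trace (dW m ** \<rho> ** cadj (dW m)))"
    proof (rule qfi_generic)
      show "(W m has_vector_derivative dW m) (at \<theta>0)" for m using Wd dWe by simp
      show "(\<Sum>m\<in>UNIV. cadj (W m \<theta>0) ** W m \<theta>0) = mat 1" by (rule iso)
      show "(\<Sum>m\<in>UNIV. cadj (W m \<theta>0) ** dW m) = 0" by (rule orth)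
      show "channel (\<lambda>m. W m \<theta>0) \<rho> = \<rho>" using chan H by simp
      show "\<rho> $ s $ s' = (\<Sum>a\<in>UNIV. \<xi> a s * cnj (\<xi> a s'))" for s s' using H by blast
    qed
  qed
  show ?thesis
    apply (rule exI[of _ h])
    apply (unfold Let_def)
    using herm main unfolding dW_def E_def W_def u_def by blast
qed

end
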